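(* Let $e,n\geq 1$. A basis of $H^\bullet(\Gamma(e,e,n);\mathbb{Q})$ is naturally indexed by the orbits, under the action of $W=G(e,e,n)$, of the set of invariant $e$-multigraphs on $n$ vertices: for each such orbit with representative $\Delta$, the class $\sum_{w\in W}w(\omega_\Delta)$ is nonzero, and these classes form a basis, the class of $\Delta$ having degree equal to the number of edges of $\Delta$.
   Context: For a finite complex reflection group $W$ with hyperplane set $\mathcal A$, $P=\pi_1(\mathbb{C}^\ell\setminus\bigcup\mathcal A)$, $B=\pi_1((\mathbb{C}^\ell\setminus\bigcup\mathcal A)/W)$, $\Gamma=B/[P,P]$; then $H^\bullet(\Gamma;\mathbb{Q})\cong\Lambda^\bullet(\mathbb{Q}\mathcal A)^W$, where $H^1$ of $P^{ab}\cong\mathbb{Z}\mathcal A$ has basis the forms $d\log$ of the hyperplanes' linear forms and $W$ acts by permuting them. $G(e,e,n)$ is the group of $n\times n$ monomial matrices with nonzero entries in $\mu_e$ (the $e$-th roots of unity) whose product is $1$; $\Gamma(e,e,n)$ is $\Gamma$ for this group; its hyperplanes are $z_i=\zeta z_j$, $i<j$, $\zeta\in\mu_e$. $K_n(e)$ is the complete $e$-multigraph on $\{1,\dots,n\}$ with $e$ edges between each pair $i<j$, labelled by $\zeta\in\mu_e$; an $e$-multigraph on $n$ vertices is a subgraph (subset of edges) of $K_n(e)$. The edge $(i,j,\zeta)$ corresponds to the 1-form $\omega^{\zeta}_{i,j}=d\log(z_i-\zeta z_j)$, and a multigraph $\Delta$ to the wedge product $\omega_\Delta$ of its edges' forms ordered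 lexicographically in $(i,j,\zeta)$ (for a fixed order of $\mu_e$). $W$ acts on multigraphs through its action on hyperplanes. $\mathrm{Stab}_W(\Delta)$ is the subgroup of $W$ preserving $\Delta$; $\Delta$ is invariant if every element of $\mathrm{Stab}_W(\Delta)$ induces an even permutation of the edges of $\Delta$. *)

theory Defs
  imports Complex_Main "HOL-Library.Product_Lexorder" "HOL-Combinatorics.Permutations"
begin

text \<open>
  Vertices are 0,...,n-1.  A root of unity zeta = exp(2 pi i k / e) is encoded by its
  exponent k < e; mu_e is ordered by this exponent.  The edge (i,j,k) with i < j < n, k < e
  stands for the hyperplane z_i = zeta^k z_j, i.e. the 1-form d log(z_i - zeta^k z_j).
  Edges (type nat * nat * nat) are ordered lexicographically (Product_Lexorder).
\<close>

type_synonym edge = "nat \<times> nat \<times> nat"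

definition hyp :: "nat \<Rightarrow> nat \<Rightarrow> edge set" where
  "hyp e n = {(i, j, k). i < j \<and> j < n \<and> k < e}"

text \<open>The group G(e,e,n): a pair (sigma, c) stands for the monomial matrix w with
  w e_i = zeta^(c i) e_(sigma i); the condition on the sum of the c i is that
  the product of the nonzero entries is 1.\<close>
definition Geen :: "nat \<Rightarrow> nat \<Rightarrow> ((nat \<Rightarrow> nat) \<times> (nat \<Rightarrow> nat)) set" where
  "Geen e n = {(\<sigma>, c). \<sigma> permutes {..<n} \<and> (\<forall>i. n \<le> i \<longrightarrow> c i = 0)
                 \<and> (\<forall>i<n. c i < e) \<and> (\<Sum>i<n. c i) mod e = 0}"

text \<open>Action of w on hyperplanes: w maps the hyperplane z_i = zeta^k z_j to
  y_(sigma i) = zeta^(k + c i - c j) y_(sigma j).\<close>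
fun edge_map :: "nat \<Rightarrow> (nat \<Rightarrow> nat) \<times> (nat \<Rightarrow> nat) \<Rightarrow> edge \<Rightarrow> edge" where
  "edge_map e (\<sigma>, c) (i, j, k) =
     (let m = (k + c i + (e - c j)) mod e in
      if \<sigma> i < \<sigma> j then (\<sigma> i, \<sigma> j, m) else (\<sigma> j, \<sigma> i, (e - m) mod e))"

text \<open>Sign with which w sends omega_S to +- omega_(w S): (-1)^(number of inversions of
  the sequence w(a_1),...,w(a_k), where a_1 < ... < a_k are the edges of S).  For w in the
  stabiliser of S this is the sign of the permutation of the edges of S induced by w.\<close>
definition act_sign :: "nat \<Rightarrow> (nat \<Rightarrow> nat) \<times> (nat \<Rightarrow> nat) \<Rightarrow> edge set \<Rightarrow> rat" where
  "act_sign e w S = (-1) ^ card {(a, b). a \<in> S \<and> b \<in> S \<and> a < b \<and> edge_map e w b < edge_map e w a}"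

text \<open>The exterior algebra Lambda(Q A): an element is its coefficient function on the
  basis omega_S, S a subset of A (coefficient 0 outside Pow A).\<close>
definition ext_alg :: "nat \<Rightarrow> nat \<Rightarrow> (edge set \<Rightarrow> rat) set" where
  "ext_alg e n = {x. \<forall>S. S \<notin> Pow (hyp e n) \<longrightarrow> x S = 0}"

definition ext_act :: "nat \<Rightarrow> nat \<Rightarrow> (nat \<Rightarrow> nat) \<times> (nat \<Rightarrow> nat) \<Rightarrow> (edge set \<Rightarrow> rat) \<Rightarrow> (edge set \<Rightarrow> rat)" where
  "ext_act e n w x = (\<lambda>T. \<Sum>S\<in>Pow (hyp e n). if edge_map e w ` S = T then act_sign e w S * x S else 0)"

definition ext_inv :: "nat \<Rightarrow> nat \<Rightarrow> (edge set \<Rightarrow> rat) set" where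
  "ext_inv e n = {x \<in> ext_alg e n. \<forall>w\<in>Geen e n. ext_act e n w x = x}"

definition omega :: "edge set \<Rightarrow> (edge set \<Rightarrow> rat)" where
  "omega D = (\<lambda>T. if T = D then 1 else 0)"

definition orbit_class :: "nat \<Rightarrow> nat \<Rightarrow> edge set \<Rightarrow> (edge set \<Rightarrow> rat)" where
  "orbit_class e n D = (\<lambda>T. \<Sum>w\<in>Geen e n. ext_act e n w (omega D) T)"

definition invariant_mg :: "nat \<Rightarrow> nat \<Rightarrow> edge set \<Rightarrow> bool" where
  "invariant_mg e n D \<longleftrightarrow> D \<subseteq> hyp e n \<and>
     (\<forall>w\<in>Geen e n. edge_map e w ` D = D \<longrightarrow> act_sign e w D = 1)"

definition mg_orbit :: "nat \<Rightarrow> nat \<Rightarrow> edge set \<Rightarrow> edge set set" where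
  "mg_orbit e n D = (\<lambda>w. edge_map e w ` D) ` Geen e n"

definition inv_orbits :: "nat \<Rightarrow> nat \<Rightarrow> edge set set set" where
  "inv_orbits e n = {mg_orbit e n D | D. invariant_mg e n D}"

definition homogeneous :: "nat \<Rightarrow> (edge set \<Rightarrow> rat) \<Rightarrow> bool" where
  "homogeneous d x \<longleftrightarrow> (\<forall>T. x T \<noteq> 0 \<longrightarrow> card T = d)"

definition is_basis_family :: "(edge set \<Rightarrow> rat) set \<Rightarrow> 'i set \<Rightarrow> ('i \<Rightarrow> edge set \<Rightarrow> rat) \<Rightarrow> bool" where
  "is_basis_family V I b \<longleftrightarrow> finite I \<and> (\<forall>i\<in>I. b i \<in> V) \<and>
     (\<forall>x\<in>V. \<exists>!a. (\<forall>i. i \<notin> I \<longrightarrow> a i = 0) \<and> x = (\<lambda>T. \<Sum>i\<in>I. a i * b i T))"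

end

theory Submission
  imports Defs
begin


lemma modeq_int: "(a::nat) mod e = b mod e \<longleftrightarrow> int a mod int e = int b mod int e"
  by (metis of_nat_eq_iff zmod_int)
lemma int_sub: "t \<le> e \<Longrightarrow> int (e - t) = int e - int t" by simp
lemma mod_le: "0 < (e::nat) \<Longrightarrow> x mod e \<le> e" by (meson less_imp_le mod_less_divisor)

lemma M1:
  fixes k ci cj di dj e :: nat
  assumes "ci < e" "cj < e" "di < e" "dj < e"
  shows "((k + ci + (e - cj)) mod e + di + (e - dj)) mod e
       = (k + (ci + di) mod e + (e - (cj + dj) mod e)) mod e"
proof -
  have e: "e > 0" using assms by auto
  note le = mod_le[OF e] less_imp_le[OF assms(2)] less_imp_le[OF assms(4)]
  show ?thesis
  apply (simp only: modeq_int of_nat_add int_sub le zmod_int)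
  apply (simp only: mod_eq_dvd_iff)
  apply (simp only: flip: minus_div_mult_eq_mod)
  apply (simp add: algebra_simps)
  done
qed

lemma M2:
  fixes k ci cj di dj e :: nat
  assumes "ci < e" "cj < e" "di < e" "dj < e"
  shows "((e - (k + ci + (e - cj)) mod e) mod e + dj + (e - di)) mod e
       = (e - (k + (ci + di) mod e + (e - (cj + dj) mod e)) mod e) mod e"
proof -
  have e: "e > 0" using assms by auto
  note le = mod_le[OF e] less_imp_le[OF assms(1)] less_imp_le[OF assms(3)]
    less_imp_le[OF assms(2)] less_imp_le[OF assms(4)]
  show ?thesis
  apply (simp only: modeq_int of_nat_add int_sub le zmod_int)
  apply (simp only: mod_eq_dvd_iff)
  apply (simp only: flip: minus_div_mult_eq_mod)
  apply (simp add: algebra_simps)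
  done
qed

lemma M3: "(x::nat) < e \<Longrightarrow> (e - (e - x) mod e) mod e = x"
  by (metis diff_diff_cancel diff_less_eq le_refl less_imp_le mod_less mod_self neq0_conv zero_less_diff)


definition mul :: "nat \<Rightarrow> nat \<Rightarrow> (nat\<Rightarrow>nat)\<times>(nat\<Rightarrow>nat) \<Rightarrow> (nat\<Rightarrow>nat)\<times>(nat\<Rightarrow>nat) \<Rightarrow> (nat\<Rightarrow>nat)\<times>(nat\<Rightarrow>nat)" where
  "mul e n v w = (fst v \<circ> fst w, \<lambda>i. if i < n then (snd w i + snd v (fst w i)) mod e else 0)"

lemma GeenD:
  assumes "(\<sigma>, c) \<in> Geen e n"
  shows "\<sigma> permutes {..<n}" "\<And>i. n \<le> i \<Longrightarrow> c i = 0" "\<And>i. i < n \<Longrightarrow> c i < e"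
    "(\<Sum>i<n. c i) mod e = 0"
  using assms unfolding Geen_def by auto

lemma edge_map_mul:
  assumes v: "(\<tau>, d) \<in> Geen e n" and w: "(\<sigma>, c) \<in> Geen e n" and ij: "i < j" "j < n" and k: "k < e"
  shows "edge_map e (mul e n (\<tau>, d) (\<sigma>, c)) (i, j, k) = edge_map e (\<tau>, d) (edge_map e (\<sigma>, c) (i, j, k))"
proof -
  note sp = GeenD[OF w] and tp = GeenD[OF v]
  have si: "\<sigma> i < n" "\<sigma> j < n" using ij permutes_in_image[OF sp(1)] by auto
  have sne: "\<sigma> i \<noteq> \<sigma> j" using ij permutes_inj[OF sp(1)] by (metis inj_eq less_irrefl)
  have tne: "\<tau> (\<sigma> i) \<noteq> \<tau> (\<sigma> j)" using sne permutes_inj[OF tp(1)] by (metis inj_eq)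
  have lt: "c i < e" "c j < e" "d (\<sigma> i) < e" "d (\<sigma> j) < e" using ij si sp(3) tp(3) by auto
  have e: "e > 0" using k by auto
  define m where "m = (k + (c i + d (\<sigma> i)) mod e + (e - (c j + d (\<sigma> j)) mod e)) mod e"
  have mlt: "m < e" using e m_def by simp
  have comp: "edge_map e (mul e n (\<tau>, d) (\<sigma>, c)) (i, j, k) =
     (if \<tau> (\<sigma> i) < \<tau> (\<sigma> j) then (\<tau> (\<sigma> i), \<tau> (\<sigma> j), m) else (\<tau> (\<sigma> j), \<tau> (\<sigma> i), (e - m) mod e))"
    using ij by (simp add: mul_def m_def Let_def)
  show ?thesis
  proof (cases "\<sigma> i < \<sigma> j")
    case True
    have eq: "((k + c i + (e - c j)) mod e + d (\<sigma> i) + (e - d (\<sigma> j))) mod e = m"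
      unfolding m_def using M1[OF lt] .
    show ?thesis using True comp eq by (simp add: Let_def)
  next
    case False
    then have F: "\<sigma> j < \<sigma> i" using sne by auto
    have eq: "((e - (k + c i + (e - c j)) mod e) mod e + d (\<sigma> j) + (e - d (\<sigma> i))) mod e = (e - m) mod e"
      unfolding m_def using M2[OF lt] .
    show ?thesis using F False tne comp eq M3[OF mlt] by (auto simp add: Let_def)
  qed
qed


lemma mul_Geen:
  assumes v: "v \<in> Geen e n" and w: "w \<in> Geen e n" and e: "1 \<le> e"
  shows "mul e n v w \<in> Geen e n"
proof -
  obtain \<tau> d where vv: "v = (\<tau>, d)" by (cases v)
  obtain \<sigma> c where ww: "w = (\<sigma>, c)" by (cases w)
  note sp = GeenD[OF w[unfolded ww]] and tp = GeenD[OF v[unfolded vv]]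
  have "(\<Sum>i<n. (c i + d (\<sigma> i)) mod e) mod e = (\<Sum>i<n. c i + d (\<sigma> i)) mod e"
    by (simp add: mod_sum_eq)
  also have "(\<Sum>i<n. c i + d (\<sigma> i)) = (\<Sum>i<n. c i) + (\<Sum>i<n. d (\<sigma> i))"
    by (simp add: sum.distrib)
  also have "(\<Sum>i<n. d (\<sigma> i)) = (\<Sum>i<n. d i)"
    using sum.permute[OF sp(1), of d] by (simp add: comp_def)
  also have "((\<Sum>i<n. c i) + (\<Sum>i<n. d i)) mod e = 0"
    using sp(4) tp(4) by (metis mod_add_eq add_0 mod_0)
  finally have s: "(\<Sum>i<n. (c i + d (\<sigma> i)) mod e) mod e = 0" .
  have s2: "(\<Sum>i<n. if i < n then (c i + d (\<sigma> i)) mod e else 0) = (\<Sum>i<n. (c i + d (\<sigma> i)) mod e)"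
    by (rule sum.cong) auto
  show ?thesis
    unfolding vv ww mul_def Geen_def using e s s2 permutes_compose[OF sp(1) tp(1)] by auto
qed

definition one :: "(nat\<Rightarrow>nat)\<times>(nat\<Rightarrow>nat)" where "one = (id, \<lambda>_. 0)"

lemma one_Geen: "1 \<le> e \<Longrightarrow> one \<in> Geen e n"
  unfolding one_def Geen_def by (auto simp: permutes_id)

lemma edge_map_one: "x \<in> hyp e n \<Longrightarrow> edge_map e one x = x"
  unfolding one_def hyp_def by auto

lemma edge_map_hyp:
  assumes w: "w \<in> Geen e n" and x: "x \<in> hyp e n"
  shows "edge_map e w x \<in> hyp e n"
proof -
  obtain \<sigma> c where ww: "w = (\<sigma>, c)" by (cases w)
  obtain i j k where xx: "x = (i, j, k)" by (cases x)
  note sp = GeenD[OF w[unfolded ww]]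
  have ij: "i < j" "j < n" "k < e" using x xx hyp_def by auto
  have si: "\<sigma> i < n" "\<sigma> j < n" using ij permutes_in_image[OF sp(1)] by auto
  have sne: "\<sigma> i \<noteq> \<sigma> j" using ij permutes_inj[OF sp(1)] by (metis inj_eq less_irrefl)
  have e: "e > 0" using ij by auto
  show ?thesis using si sne e unfolding ww xx hyp_def by (auto simp: Let_def)
qed

lemma edge_map_inj:
  assumes w: "w \<in> Geen e n"
  shows "inj_on (edge_map e w) (hyp e n)"
proof (rule inj_onI)
  fix x y assume x: "x \<in> hyp e n" and y: "y \<in> hyp e n" and eq: "edge_map e w x = edge_map e w y"
  obtain \<sigma> c where ww: "w = (\<sigma>, c)" by (cases w)
  obtain i j k where xx: "x = (i, j, k)" by (cases x)
  obtain i' j' k' where yy: "y = (i', j', k')" by (cases y)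
  note sp = GeenD[OF w[unfolded ww]]
  have ij: "i < j" "j < n" "k < e" "i' < j'" "j' < n" "k' < e" using x xx y yy hyp_def by auto
  have inj: "inj \<sigma>" using permutes_inj[OF sp(1)] .
  have lt: "c i < e" "c j < e" "c i' < e" "c j' < e" using ij sp(3) by auto
  have sne: "\<sigma> i \<noteq> \<sigma> j" "\<sigma> i' \<noteq> \<sigma> j'" using ij inj by (metis inj_eq less_irrefl)+
  have e: "e > 0" using ij by auto
  have key: "i = i' \<and> j = j'"
    using eq sne ij inj unfolding ww xx yy
    by (auto simp: Let_def inj_eq split: if_splits)
  then have "(k + c i + (e - c j)) mod e = (k' + c i + (e - c j)) mod e"
  proof -
    have "(e - (k + c i + (e - c j)) mod e) mod e = (e - (k' + c i + (e - c j)) mod e) mod e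
        \<or> (k + c i + (e - c j)) mod e = (k' + c i + (e - c j)) mod e"
      using eq key unfolding ww xx yy by (auto simp: Let_def split: if_splits)
    then show ?thesis
      by (metis M3 e mod_less_divisor)
  qed
  then have "k mod e = k' mod e"
    apply (simp only: modeq_int of_nat_add mod_eq_dvd_iff)
    apply simp
    done
  then have "k = k'" using ij by simp
  then show "x = y" using key xx yy by simp
qed


lemma finite_Geen: "finite (Geen e n)"
proof -
  define C where "C = {c::nat\<Rightarrow>nat. (\<forall>i. n \<le> i \<longrightarrow> c i = 0) \<and> (\<forall>i<n. c i < e)}"
  have "inj_on (\<lambda>c. restrict c {..<n}) C"
  proof (rule inj_onI)
    fix c c' assume "c \<in> C" "c' \<in> C" "restrict c {..<n} = restrict c' {..<n}"
    then show "c = c'" unfolding C_def fun_eq_iff restrict_def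
      by (metis (mono_tags, lifting) lessThan_iff mem_Collect_eq not_le)
  qed
  moreover have "(\<lambda>c. restrict c {..<n}) ` C \<subseteq> PiE {..<n} (\<lambda>_. {..<e})"
    by (rule image_subsetI, subst restrict_PiE_iff, auto simp: C_def)
  ultimately have fC: "finite C" by (rule inj_on_finite) (simp add: finite_PiE)
  have "Geen e n \<subseteq> {\<sigma>. \<sigma> permutes {..<n}} \<times> C"
    unfolding Geen_def C_def by auto
  moreover have "finite ({\<sigma>. \<sigma> permutes {..<n}} \<times> C)"
    using fC finite_permutations[of "{..<n}"] by simp
  ultimately show ?thesis by (rule finite_subset)
qed

lemma mod_cancel_lt:
  fixes a b x e :: nat
  assumes "a < e" "b < e" "(x + a) mod e = (x + b) mod e"
  shows "a = b"
proof -
  have "a mod e = b mod e" using assms(3)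
    apply (simp only: modeq_int of_nat_add mod_eq_dvd_iff)
    apply simp
    done
  then show ?thesis using assms by simp
qed

lemma mul_left_inj:
  assumes v: "v \<in> Geen e n" and w: "w \<in> Geen e n" and w': "w' \<in> Geen e n"
    and eq: "mul e n v w = mul e n v w'"
  shows "w = w'"
proof -
  obtain \<tau> d where vv: "v = (\<tau>, d)" by (cases v)
  obtain \<sigma> c where ww: "w = (\<sigma>, c)" by (cases w)
  obtain \<sigma>' c' where ww': "w' = (\<sigma>', c')" by (cases w')
  note sp = GeenD[OF w[unfolded ww]] and sp' = GeenD[OF w'[unfolded ww']] and tp = GeenD[OF v[unfolded vv]]
  have "\<tau> \<circ> \<sigma> = \<tau> \<circ> \<sigma>'" using eq unfolding vv ww ww' mul_def by simp
  then have s: "\<sigma> = \<sigma>'"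
  proof -
    assume h: "\<tau> \<circ> \<sigma> = \<tau> \<circ> \<sigma>'"
    show ?thesis
    proof
      fix x
      have "\<tau> (\<sigma> x) = \<tau> (\<sigma>' x)" using h by (metis comp_apply)
      then show "\<sigma> x = \<sigma>' x" using permutes_inj[OF tp(1)] by (simp add: inj_eq)
    qed
  qed
  have "c i = c' i" for i
  proof (cases "i < n")
    case True
    have "snd (mul e n v w) i = snd (mul e n v w') i" using eq by simp
    then have "(c i + d (\<sigma> i)) mod e = (c' i + d (\<sigma> i)) mod e"
      using True s unfolding vv ww ww' mul_def by simp
    then show ?thesis using mod_cancel_lt[of "c i" e "c' i" "d (\<sigma> i)"] sp(3) sp'(3) True
      by (simp add: add.commute)
  next
    case False then show ?thesis using sp(2) sp'(2) by simp
  qed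
  then show ?thesis using s ww ww' by auto
qed

lemma mul_right_inj:
  assumes v: "v \<in> Geen e n" and w: "w \<in> Geen e n" and w': "w' \<in> Geen e n"
    and eq: "mul e n w v = mul e n w' v"
  shows "w = w'"
proof -
  obtain \<tau> d where vv: "v = (\<tau>, d)" by (cases v)
  obtain \<sigma> c where ww: "w = (\<sigma>, c)" by (cases w)
  obtain \<sigma>' c' where ww': "w' = (\<sigma>', c')" by (cases w')
  note sp = GeenD[OF w[unfolded ww]] and sp' = GeenD[OF w'[unfolded ww']] and tp = GeenD[OF v[unfolded vv]]
  have "\<sigma> \<circ> \<tau> = \<sigma>' \<circ> \<tau>" using eq unfolding vv ww ww' mul_def by simp
  then have s: "\<sigma> = \<sigma>'"
  proof -
    assume h: "\<sigma> \<circ> \<tau> = \<sigma>' \<circ> \<tau>"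
    show ?thesis
    proof
      fix x
      obtain y where "x = \<tau> y" using permutes_surj[OF tp(1)] by (metis surjD)
      then show "\<sigma> x = \<sigma>' x" using h by (metis comp_apply)
    qed
  qed
  have "c j = c' j" for j
  proof (cases "j < n")
    case True
    then obtain i where i: "i < n" "\<tau> i = j" using permutes_image[OF tp(1)]
      by (metis imageE lessThan_iff)
    have "snd (mul e n w v) i = snd (mul e n w' v) i" using eq by simp
    then have "(d i + c (\<tau> i)) mod e = (d i + c' (\<tau> i)) mod e"
      using i unfolding vv ww ww' mul_def by simp
    then show ?thesis using mod_cancel_lt[of "c j" e "c' j" "d i"] sp(3) sp'(3) True i
      by simp
  next
    case False then show ?thesis using sp(2) sp'(2) by simp
  qed
  then show ?thesis using s ww ww' by auto
qed

lemma mul_left_image: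
  assumes "v \<in> Geen e n" "1 \<le> e"
  shows "mul e n v ` Geen e n = Geen e n"
  apply (rule endo_inj_surj[OF finite_Geen])
  using assms mul_Geen apply blast
  by (rule inj_onI, rule mul_left_inj[OF assms(1)]) auto

lemma mul_right_image:
  assumes "v \<in> Geen e n" "1 \<le> e"
  shows "(\<lambda>w. mul e n w v) ` Geen e n = Geen e n"
  apply (rule endo_inj_surj[OF finite_Geen])
  using assms mul_Geen apply blast
  by (rule inj_onI, rule mul_right_inj[OF assms(1)]) auto


definition asg :: "('a::linorder \<Rightarrow> 'b::linorder) \<Rightarrow> 'a set \<Rightarrow> rat" where
  "asg f D = (-1) ^ card {(a, b). a \<in> D \<and> b \<in> D \<and> a < b \<and> f b < f a}"

lemma act_sign_asg: "act_sign e w D = asg (edge_map e w) D"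
  unfolding act_sign_def asg_def by simp

lemma asg_cong: "(\<And>x. x \<in> D \<Longrightarrow> f x = f' x) \<Longrightarrow> asg f D = asg f' D"
  unfolding asg_def
  by (rule arg_cong[where f="\<lambda>k. (-1::rat) ^ card k"]) auto

lemma asg_prod:
  assumes "finite D"
  shows "asg f D = (\<Prod>p\<in>{(a, b). a \<in> D \<and> b \<in> D \<and> a < b}. if f (snd p) < f (fst p) then -1 else 1)"
proof -
  let ?P = "{(a, b). a \<in> D \<and> b \<in> D \<and> a < b}"
  have fP: "finite ?P" by (rule finite_subset[of _ "D \<times> D"]) (use assms in auto)
  have "(\<Prod>p\<in>?P. if f (snd p) < f (fst p) then -1 else (1::rat))
      = (\<Prod>p\<in>?P \<inter> {p. f (snd p) < f (fst p)}. -1) * (\<Prod>p\<in>?P \<inter> - {p. f (snd p) < f (fst p)}. 1)"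
    by (rule prod.If_cases[OF fP])
  also have "\<dots> = (-1) ^ card (?P \<inter> {p. f (snd p) < f (fst p)})" by simp
  also have "?P \<inter> {p. f (snd p) < f (fst p)} = {(a, b). a \<in> D \<and> b \<in> D \<and> a < b \<and> f b < f a}"
    by auto
  finally show ?thesis unfolding asg_def by simp
qed

lemma asg_comp:
  fixes f :: "'a::linorder \<Rightarrow> 'b::linorder" and g :: "'b \<Rightarrow> 'c::linorder"
  assumes fin: "finite D" and inf: "inj_on f D" and ing: "inj_on g (f ` D)"
  shows "asg (g \<circ> f) D = asg f D * asg g (f ` D)"
proof -
  let ?P = "{(a, b). a \<in> D \<and> b \<in> D \<and> a < b}"
  let ?Q = "{(x, y). x \<in> f ` D \<and> y \<in> f ` D \<and> x < y}"
  define u where "u = (\<lambda>x y. if (g x < g y) = (x < y) then 1 else (-1::rat))"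
  define h where "h = (\<lambda>p. if g (snd p) < g (fst p) then -1 else (1::rat))"
  define \<phi> where "\<phi> = (\<lambda>p. (min (f (fst p)) (f (snd p)), max (f (fst p)) (f (snd p))))"
  have ne: "f a \<noteq> f b" "g (f a) \<noteq> g (f b)" if "a \<in> D" "b \<in> D" "a < b" for a b
    using that inf ing by (auto simp: inj_on_eq_iff)
  have step1: "(if (g \<circ> f) (snd p) < (g \<circ> f) (fst p) then -1 else 1)
      = (if f (snd p) < f (fst p) then -1 else 1) * u (f (fst p)) (f (snd p))" if "p \<in> ?P" for p
  proof -
    obtain a b where p: "p = (a, b)" "a \<in> D" "b \<in> D" "a < b" using \<open>p \<in> ?P\<close> by auto
    show ?thesis using ne[OF p(2-4)] unfolding p(1) u_def by (auto simp: not_less_iff_gr_or_eq)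
  qed
  have step2: "u (f (fst p)) (f (snd p)) = h (\<phi> p)" if "p \<in> ?P" for p
  proof -
    obtain a b where p: "p = (a, b)" "a \<in> D" "b \<in> D" "a < b" using \<open>p \<in> ?P\<close> by auto
    show ?thesis using ne[OF p(2-4)] unfolding p(1) u_def h_def \<phi>_def
      by (auto simp: min_def max_def not_less_iff_gr_or_eq)
  qed
  have bij: "bij_betw \<phi> ?P ?Q"
  proof (rule bij_betw_imageI)
    show "inj_on \<phi> ?P"
    proof (rule inj_onI)
      fix p q assume p: "p \<in> ?P" and q: "q \<in> ?P" and eq: "\<phi> p = \<phi> q"
      obtain a b where pp: "p = (a, b)" "a \<in> D" "b \<in> D" "a < b" using p by auto
      obtain a' b' where qq: "q = (a', b')" "a' \<in> D" "b' \<in> D" "a' < b'" using q by auto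
      have "(f a = f a' \<and> f b = f b') \<or> (f a = f b' \<and> f b = f a')"
        using eq ne[OF pp(2-4)] ne[OF qq(2-4)] unfolding pp qq \<phi>_def
        by (auto simp: min_def max_def split: if_splits)
      then have "(a = a' \<and> b = b') \<or> (a = b' \<and> b = a')"
        using inf pp qq by (auto simp: inj_on_eq_iff)
      then show "p = q" using pp qq by auto
    qed
    show "\<phi> ` ?P = ?Q"
    proof
      show "\<phi> ` ?P \<subseteq> ?Q"
      proof
        fix q assume "q \<in> \<phi> ` ?P"
        then obtain a b where pp: "q = \<phi> (a, b)" "a \<in> D" "b \<in> D" "a < b" by auto
        show "q \<in> ?Q" using ne[OF pp(2-4)] pp unfolding \<phi>_def
          by (auto simp: min_def max_def)
      qed
      show "?Q \<subseteq> \<phi> ` ?P"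
      proof
        fix q assume "q \<in> ?Q"
        then obtain a b where qq: "q = (f a, f b)" "a \<in> D" "b \<in> D" "f a < f b" by auto
        then have "a \<noteq> b" by auto
        then consider "a < b" | "b < a" using neqE by blast
        then show "q \<in> \<phi> ` ?P"
        proof cases
          case 1
          then have "\<phi> (a, b) = q" using qq unfolding \<phi>_def by auto
          then show ?thesis using 1 qq by (auto intro!: image_eqI[of _ _ "(a, b)"])
        next
          case 2
          then have "\<phi> (b, a) = q" using qq unfolding \<phi>_def by auto
          then show ?thesis using 2 qq by (auto intro!: image_eqI[of _ _ "(b, a)"])
        qed
      qed
    qed
  qed
  have "asg (g \<circ> f) D = (\<Prod>p\<in>?P. (if f (snd p) < f (fst p) then -1 else 1) * u (f (fst p)) (f (snd p)))"
    unfolding asg_prod[OF fin] by (rule prod.cong) (use step1 in auto)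
  also have "\<dots> = asg f D * (\<Prod>p\<in>?P. u (f (fst p)) (f (snd p)))"
    unfolding asg_prod[OF fin] by (simp add: prod.distrib)
  also have "(\<Prod>p\<in>?P. u (f (fst p)) (f (snd p))) = (\<Prod>p\<in>?P. h (\<phi> p))"
    by (rule prod.cong) (use step2 in auto)
  also have "\<dots> = prod h ?Q" by (rule prod.reindex_bij_betw[OF bij])
  also have "\<dots> = asg g (f ` D)" unfolding asg_prod[OF finite_imageI[OF fin]] h_def by simp
  finally show ?thesis .
qed

lemma finite_hyp: "finite (hyp e n)"
  by (rule finite_subset[of _ "{..<n} \<times> {..<n} \<times> {..<e}"]) (auto simp: hyp_def)

lemma act_sign_mul:
  assumes v: "v \<in> Geen e n" and w: "w \<in> Geen e n" and D: "D \<subseteq> hyp e n"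
  shows "act_sign e (mul e n v w) D = act_sign e w D * act_sign e v (edge_map e w ` D)"
proof -
  have fD: "finite D" using D finite_hyp finite_subset by blast
  have "act_sign e (mul e n v w) D = asg (edge_map e v \<circ> edge_map e w) D"
    unfolding act_sign_asg
  proof (rule asg_cong)
    fix x assume "x \<in> D"
    then have "x \<in> hyp e n" using D by auto
    moreover obtain i j k where "x = (i, j, k)" by (cases x)
    moreover obtain \<tau> d where "v = (\<tau>, d)" by (cases v)
    moreover obtain \<sigma> c where "w = (\<sigma>, c)" by (cases w)
    ultimately show "edge_map e (mul e n v w) x = (edge_map e v \<circ> edge_map e w) x"
      using edge_map_mul v w by (auto simp: hyp_def)
  qed
  also have "\<dots> = act_sign e w D * act_sign e v (edge_map e w ` D)"
    unfolding act_sign_asg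
  proof (rule asg_comp[OF fD])
    show "inj_on (edge_map e w) D" using edge_map_inj[OF w] D inj_on_subset by blast
    have "edge_map e w ` D \<subseteq> hyp e n" using edge_map_hyp[OF w] D by auto
    then show "inj_on (edge_map e v) (edge_map e w ` D)" using edge_map_inj[OF v] inj_on_subset by blast
  qed
  finally show ?thesis .
qed




lemma act_sign_pm: "act_sign e w D = 1 \<or> act_sign e w D = -1"
proof -
  have "(-1::rat) ^ k = 1 \<or> (-1::rat) ^ k = -1" for k by (induct k) auto
  then show ?thesis unfolding act_sign_def by blast
qed

lemma act_sign_sq: "act_sign e w D * act_sign e w D = 1"
  using act_sign_pm[of e w D] by auto

lemma mul_image:
  assumes v: "v \<in> Geen e n" and w: "w \<in> Geen e n" and D: "D \<subseteq> hyp e n"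
  shows "edge_map e (mul e n v w) ` D = edge_map e v ` (edge_map e w ` D)"
proof -
  have "edge_map e (mul e n v w) x = edge_map e v (edge_map e w x)" if "x \<in> D" for x
  proof -
    have hx: "x \<in> hyp e n" using D that by auto
    obtain i j k where x: "x = (i, j, k)" by (cases x)
    obtain \<tau> d where vv: "v = (\<tau>, d)" by (cases v)
    obtain \<sigma> c where ww: "w = (\<sigma>, c)" by (cases w)
    have ijk: "i < j" "j < n" "k < e" using hx x hyp_def by auto
    show ?thesis unfolding x vv ww
      by (rule edge_map_mul[OF v[unfolded vv] w[unfolded ww] ijk])
  qed
  then have "edge_map e (mul e n v w) ` D = (edge_map e v \<circ> edge_map e w) ` D"
    by (intro image_cong) auto
  then show ?thesis by (simp add: image_comp)
qed

lemma image_hyp: "w \<in> Geen e n \<Longrightarrow> D \<subseteq> hyp e n \<Longrightarrow> edge_map e w ` D \<subseteq> hyp e n"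
  using edge_map_hyp by blast

lemma oc_eq:
  assumes D: "D \<subseteq> hyp e n"
  shows "orbit_class e n D T = (\<Sum>w\<in>Geen e n. if edge_map e w ` D = T then act_sign e w D else 0)"
  unfolding orbit_class_def
proof (rule sum.cong[OF refl])
  fix w
  have "ext_act e n w (omega D) T = (\<Sum>S\<in>Pow (hyp e n). if S = D then (if edge_map e w ` D = T then act_sign e w D else 0) else 0)"
    unfolding ext_act_def omega_def by (rule sum.cong) auto
  also have "\<dots> = (if edge_map e w ` D = T then act_sign e w D else 0)"
    using D finite_hyp by simp
  finally show "ext_act e n w (omega D) T = (if edge_map e w ` D = T then act_sign e w D else 0)" .
qed

lemma ext_act_image:
  assumes w: "w \<in> Geen e n" and S: "S \<subseteq> hyp e n"
  shows "ext_act e n w x (edge_map e w ` S) = act_sign e w S * x S"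
proof -
  have inj: "inj_on (image (edge_map e w)) (Pow (hyp e n))"
    using inj_on_image_Pow[OF edge_map_inj[OF w]] .
  have "ext_act e n w x (edge_map e w ` S) = (\<Sum>S'\<in>Pow (hyp e n). if S' = S then act_sign e w S' * x S' else 0)"
    unfolding ext_act_def
  proof (rule sum.cong[OF refl])
    fix S' assume "S' \<in> Pow (hyp e n)"
    then have "(edge_map e w ` S' = edge_map e w ` S) = (S' = S)"
      using inj S by (auto simp: inj_on_eq_iff)
    then show "(if edge_map e w ` S' = edge_map e w ` S then act_sign e w S' * x S' else 0) =
          (if S' = S then act_sign e w S' * x S' else 0)" by simp
  qed
  also have "\<dots> = act_sign e w S * x S" using S finite_hyp by simp
  finally show ?thesis .
qed

lemma inv_val:
  assumes x: "x \<in> ext_inv e n" and w: "w \<in> Geen e n" and S: "S \<subseteq> hyp e n"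
  shows "x (edge_map e w ` S) = act_sign e w S * x S"
proof -
  have "ext_act e n w x = x" using x w unfolding ext_inv_def by auto
  then show ?thesis using ext_act_image[OF w S, of x] by simp
qed

lemma inv_nonzero_invariant:
  assumes x: "x \<in> ext_inv e n" and T: "x T \<noteq> 0"
  shows "invariant_mg e n T"
proof -
  have Th: "T \<subseteq> hyp e n" using x T unfolding ext_inv_def ext_alg_def by auto
  have "act_sign e w T = 1" if w: "w \<in> Geen e n" and st: "edge_map e w ` T = T" for w
  proof (rule ccontr)
    assume "act_sign e w T \<noteq> 1"
    then have "act_sign e w T = -1" using act_sign_pm by blast
    then have "x T = - x T" using inv_val[OF x w Th] st by simp
    then show False using T by simp
  qed
  then show ?thesis unfolding invariant_mg_def using Th by auto
qed

lemma oc_inv: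
  assumes D: "D \<subseteq> hyp e n" and e: "1 \<le> e"
  shows "orbit_class e n D \<in> ext_inv e n"
proof -
  have alg: "orbit_class e n D \<in> ext_alg e n"
    unfolding ext_alg_def
  proof (intro CollectI allI impI)
    fix S assume S: "S \<notin> Pow (hyp e n)"
    have "(if edge_map e w ` D = S then act_sign e w D else 0) = 0" if "w \<in> Geen e n" for w
      using image_hyp[OF that D] S by auto
    then show "orbit_class e n D S = 0" unfolding oc_eq[OF D] by simp
  qed
  have "ext_act e n v (orbit_class e n D) = orbit_class e n D" if v: "v \<in> Geen e n" for v
  proof
    fix T
    have "ext_act e n v (orbit_class e n D) T =
      (\<Sum>S\<in>Pow (hyp e n). \<Sum>w\<in>Geen e n. if edge_map e w ` D = S \<and> edge_map e v ` S = T
          then act_sign e v S * act_sign e w D else 0)"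
      unfolding ext_act_def oc_eq[OF D]
      by (rule sum.cong[OF refl]) (auto simp: sum_distrib_left intro!: sum.cong)
    also have "\<dots> = (\<Sum>w\<in>Geen e n. \<Sum>S\<in>Pow (hyp e n). if S = edge_map e w ` D then
          (if edge_map e v ` (edge_map e w ` D) = T
          then act_sign e v (edge_map e w ` D) * act_sign e w D else 0) else 0)"
      by (subst sum.swap) (auto intro!: sum.cong)
    also have "\<dots> = (\<Sum>w\<in>Geen e n. if edge_map e v ` (edge_map e w ` D) = T
          then act_sign e v (edge_map e w ` D) * act_sign e w D else 0)"
      using finite_hyp image_hyp[OF _ D] by (auto intro!: sum.cong)
    also have "\<dots> = (\<Sum>w\<in>Geen e n. if edge_map e (mul e n v w) ` D = T
          then act_sign e (mul e n v w) D else 0)"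
      using mul_image[OF v _ D] act_sign_mul[OF v _ D] by (auto intro!: sum.cong simp: mult.commute)
    also have "\<dots> = (\<Sum>w'\<in>mul e n v ` Geen e n. if edge_map e w' ` D = T then act_sign e w' D else 0)"
      by (rule sum.reindex[symmetric, unfolded comp_def]) (rule inj_onI, rule mul_left_inj[OF v], auto)
    also have "\<dots> = orbit_class e n D T"
      unfolding mul_left_image[OF v e] oc_eq[OF D] ..
    finally show "ext_act e n v (orbit_class e n D) T = orbit_class e n D T" .
  qed
  then show ?thesis using alg unfolding ext_inv_def by auto
qed

lemma oc_self:
  assumes D: "invariant_mg e n D" and e: "1 \<le> e"
  shows "orbit_class e n D D \<noteq> 0"
proof -
  have Dh: "D \<subseteq> hyp e n" using D invariant_mg_def by auto
  have "orbit_class e n D D = (\<Sum>w\<in>Geen e n. if edge_map e w ` D = D then 1 else 0)"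
    unfolding oc_eq[OF Dh]
  proof (rule sum.cong[OF refl])
    fix w assume "w \<in> Geen e n"
    then show "(if edge_map e w ` D = D then act_sign e w D else 0) = (if edge_map e w ` D = D then 1 else 0)"
      using D unfolding invariant_mg_def by simp
  qed
  moreover have "edge_map e one ` D = (\<lambda>x. x) ` D"
    by (rule image_cong[OF refl], rule edge_map_one[OF subsetD[OF Dh]])
  then have "edge_map e one ` D = D" by simp
  then have "0 < (\<Sum>w\<in>Geen e n. if edge_map e w ` D = D then 1 else (0::rat))"
    by (intro sum_pos2[OF finite_Geen one_Geen[OF e]]) auto
  ultimately show ?thesis by simp
qed

lemma mg_orbit_cong:
  assumes w: "w \<in> Geen e n" and D: "D \<subseteq> hyp e n" and e: "1 \<le> e"
  shows "mg_orbit e n (edge_map e w ` D) = mg_orbit e n D"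
proof -
  have "mg_orbit e n (edge_map e w ` D) = (\<lambda>u. edge_map e (mul e n u w) ` D) ` Geen e n"
    unfolding mg_orbit_def using mul_image[OF _ w D] by auto
  also have "\<dots> = (\<lambda>w'. edge_map e w' ` D) ` ((\<lambda>u. mul e n u w) ` Geen e n)"
    by (simp add: image_image)
  also have "\<dots> = mg_orbit e n D" unfolding mul_right_image[OF w e] mg_orbit_def ..
  finally show ?thesis .
qed

lemma oc_supp:
  assumes D: "D \<subseteq> hyp e n" and T: "orbit_class e n D T \<noteq> 0"
  shows "T \<in> mg_orbit e n D"
proof (rule ccontr)
  assume "T \<notin> mg_orbit e n D"
  then have "\<forall>w\<in>Geen e n. edge_map e w ` D \<noteq> T" unfolding mg_orbit_def by auto
  then have "orbit_class e n D T = 0" unfolding oc_eq[OF D] by simp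
  then show False using T by simp
qed



lemma orbit_sub: "D \<subseteq> hyp e n \<Longrightarrow> mg_orbit e n D \<subseteq> Pow (hyp e n)"
  unfolding mg_orbit_def using image_hyp by blast

lemma rep_facts:
  assumes O: "Orb \<in> inv_orbits e n" and r: "R \<in> Orb" and e: "1 \<le> e"
  shows "R \<subseteq> hyp e n" "invariant_mg e n R" "mg_orbit e n R = Orb"
proof -
  obtain D where D: "Orb = mg_orbit e n D" "invariant_mg e n D"
    using O unfolding inv_orbits_def by auto
  have Dh: "D \<subseteq> hyp e n" using D(2) invariant_mg_def by auto
  obtain v where v: "v \<in> Geen e n" "R = edge_map e v ` D" using r D(1) unfolding mg_orbit_def by auto
  show Rh: "R \<subseteq> hyp e n" using image_hyp[OF v(1) Dh] v(2) by simp
  show "mg_orbit e n R = Orb" using mg_orbit_cong[OF v(1) Dh e] v(2) D(1) by simp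
  have oi: "orbit_class e n D \<in> ext_inv e n" by (rule oc_inv[OF Dh e])
  have "orbit_class e n D R = act_sign e v D * orbit_class e n D D"
    using inv_val[OF oi v(1) Dh] v(2) by simp
  moreover have "act_sign e v D \<noteq> 0" using act_sign_pm[of e v D] by auto
  ultimately have "orbit_class e n D R \<noteq> 0" using oc_self[OF D(2) e] by simp
  then show "invariant_mg e n R" by (rule inv_nonzero_invariant[OF oi])
qed

lemma orbit_unique:
  assumes O: "Orb \<in> inv_orbits e n" "Orb' \<in> inv_orbits e n" and T: "T \<in> Orb" "T \<in> Orb'" and e: "1 \<le> e"
  shows "Orb = Orb'"
  using rep_facts(3)[OF O(1) T(1) e] rep_facts(3)[OF O(2) T(2) e] by simp

lemma finite_inv_orbits: "finite (inv_orbits e n)"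
proof (rule finite_subset[of _ "Pow (Pow (hyp e n))"])
  show "inv_orbits e n \<subseteq> Pow (Pow (hyp e n))"
    unfolding inv_orbits_def invariant_mg_def using orbit_sub by blast
  show "finite (Pow (Pow (hyp e n)))" using finite_hyp by simp
qed


lemma b_supp:
  assumes O: "Orb \<in> inv_orbits e n" and r: "rep Orb \<in> Orb" and e: "1 \<le> e"
    and T: "orbit_class e n (rep Orb) T \<noteq> 0"
  shows "T \<in> Orb"
  using oc_supp[OF rep_facts(1)[OF O r e] T] rep_facts(3)[OF O r e] by simp

lemma sum_single:
  assumes rep: "\<forall>Orb\<in>inv_orbits e n. rep Orb \<in> Orb" and e: "1 \<le> e"
    and O: "Orb \<in> inv_orbits e n" and T: "T \<in> Orb"
  shows "(\<Sum>O'\<in>inv_orbits e n. c O' * orbit_class e n (rep O') T) = c Orb * orbit_class e n (rep Orb) T"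
proof -
  have "(\<Sum>O'\<in>inv_orbits e n. c O' * orbit_class e n (rep O') T)
      = (\<Sum>O'\<in>inv_orbits e n. if O' = Orb then c Orb * orbit_class e n (rep Orb) T else 0)"
  proof (rule sum.cong[OF refl])
    fix O' assume O': "O' \<in> inv_orbits e n"
    show "c O' * orbit_class e n (rep O') T = (if O' = Orb then c Orb * orbit_class e n (rep Orb) T else 0)"
    proof (cases "O' = Orb")
      case False
      have "orbit_class e n (rep O') T = 0"
      proof (rule ccontr)
        assume "orbit_class e n (rep O') T \<noteq> 0"
        then have "T \<in> O'" using b_supp[OF O' _ e] rep O' by blast
        then show False using orbit_unique[OF O O' T _ e] False by simp
      qed
      then show ?thesis using False by simp
    qed simp
  qed
  also have "\<dots> = c Orb * orbit_class e n (rep Orb) T" using O finite_inv_orbits by simp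
  finally show ?thesis .
qed

lemma sum_none:
  assumes rep: "\<forall>Orb\<in>inv_orbits e n. rep Orb \<in> Orb" and e: "1 \<le> e"
    and T: "\<forall>Orb\<in>inv_orbits e n. T \<notin> Orb"
  shows "(\<Sum>O'\<in>inv_orbits e n. c O' * orbit_class e n (rep O') T) = 0"
proof (rule sum.neutral, rule ballI)
  fix O' assume O': "O' \<in> inv_orbits e n"
  have "orbit_class e n (rep O') T = 0" using b_supp[OF O' _ e] rep O' T by blast
  then show "c O' * orbit_class e n (rep O') T = 0" by simp
qed

theorem theorem3p13:
  fixes e n :: nat and rep :: "edge set set \<Rightarrow> edge set"
  assumes "1 \<le> e" and "1 \<le> n"
    and "\<forall>Orb\<in>inv_orbits e n. rep Orb \<in> Orb"
  shows "(\<forall>Orb\<in>inv_orbits e n. orbit_class e n (rep Orb) \<noteq> (\<lambda>T. 0))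
       \<and> (\<forall>Orb\<in>inv_orbits e n. homogeneous (card (rep Orb)) (orbit_class e n (rep Orb)))
       \<and> is_basis_family (ext_inv e n) (inv_orbits e n) (\<lambda>Orb. orbit_class e n (rep Orb))"
proof -
  note e = assms(1) and rep = assms(3)
  let ?I = "inv_orbits e n"
  let ?b = "\<lambda>Orb. orbit_class e n (rep Orb)"
  have rf: "rep Orb \<subseteq> hyp e n" "invariant_mg e n (rep Orb)" "mg_orbit e n (rep Orb) = Orb"
    if "Orb \<in> ?I" for Orb
    using rep_facts[OF that _ e] rep that by auto
  have self: "?b Orb (rep Orb) \<noteq> 0" if "Orb \<in> ?I" for Orb
    using oc_self[OF rf(2)[OF that] e] .
  have P1: "\<forall>Orb\<in>?I. ?b Orb \<noteq> (\<lambda>T. 0)"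
    using self by (metis)
  have P2: "\<forall>Orb\<in>?I. homogeneous (card (rep Orb)) (?b Orb)"
  proof (intro ballI)
    fix Orb assume O: "Orb \<in> ?I"
    show "homogeneous (card (rep Orb)) (?b Orb)"
      unfolding homogeneous_def
    proof (intro allI impI)
      fix T assume "?b Orb T \<noteq> 0"
      then have "T \<in> mg_orbit e n (rep Orb)" using oc_supp[OF rf(1)[OF O]] by blast
      then obtain w where w: "w \<in> Geen e n" "T = edge_map e w ` rep Orb" unfolding mg_orbit_def by auto
      have "inj_on (edge_map e w) (rep Orb)" using edge_map_inj[OF w(1)] rf(1)[OF O] inj_on_subset by blast
      then show "card T = card (rep Orb)" using w(2) card_image by blast
    qed
  qed
  have binv: "?b Orb \<in> ext_inv e n" if "Orb \<in> ?I" for Orb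
    using oc_inv[OF rf(1)[OF that] e] .
  have P3: "is_basis_family (ext_inv e n) ?I ?b"
    unfolding is_basis_family_def
  proof (intro conjI ballI)
    show "finite ?I" by (rule finite_inv_orbits)
    show "?b Orb \<in> ext_inv e n" if "Orb \<in> ?I" for Orb using binv that .
  next
    fix x assume x: "x \<in> ext_inv e n"
    define a where "a = (\<lambda>Orb. if Orb \<in> ?I then x (rep Orb) / ?b Orb (rep Orb) else 0)"
    show "\<exists>!a. (\<forall>i. i \<notin> ?I \<longrightarrow> a i = 0) \<and> x = (\<lambda>T. \<Sum>i\<in>?I. a i * ?b i T)"
    proof (rule ex1I[of _ a])
      show "(\<forall>i. i \<notin> ?I \<longrightarrow> a i = 0) \<and> x = (\<lambda>T. \<Sum>i\<in>?I. a i * ?b i T)"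
      proof
        show "\<forall>i. i \<notin> ?I \<longrightarrow> a i = 0" unfolding a_def by simp
        show "x = (\<lambda>T. \<Sum>i\<in>?I. a i * ?b i T)"
        proof
          fix T
          show "x T = (\<Sum>i\<in>?I. a i * ?b i T)"
          proof (cases "\<exists>Orb\<in>?I. T \<in> Orb")
            case True
            then obtain Orb where O: "Orb \<in> ?I" "T \<in> Orb" by blast
            have "(\<Sum>i\<in>?I. a i * ?b i T) = a Orb * ?b Orb T" by (rule sum_single[OF rep e O])
            moreover obtain w where w: "w \<in> Geen e n" "T = edge_map e w ` rep Orb"
            proof -
              have "T \<in> mg_orbit e n (rep Orb)" using O(2) rf(3)[OF O(1)] by simp
              then show ?thesis using that unfolding mg_orbit_def by blast
            qed
            moreover have "?b Orb T = act_sign e w (rep Orb) * ?b Orb (rep Orb)"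
              using inv_val[OF binv[OF O(1)] w(1) rf(1)[OF O(1)]] w(2) by simp
            moreover have "x T = act_sign e w (rep Orb) * x (rep Orb)"
              using inv_val[OF x w(1) rf(1)[OF O(1)]] w(2) by simp
            ultimately show ?thesis using self[OF O(1)] O(1) unfolding a_def by simp
          next
            case False
            have "x T = 0"
            proof (rule ccontr)
              assume xT: "x T \<noteq> 0"
              have inv: "invariant_mg e n T" by (rule inv_nonzero_invariant[OF x xT])
              then have "mg_orbit e n T \<in> ?I" unfolding inv_orbits_def by auto
              moreover have "T \<in> mg_orbit e n T"
              proof -
                have Th: "T \<subseteq> hyp e n" using inv invariant_mg_def by auto
                have "edge_map e one ` T = (\<lambda>x. x) ` T"
                  by (rule image_cong[OF refl], rule edge_map_one[OF subsetD[OF Th]])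
                then have "edge_map e one ` T = T" by simp
                then show ?thesis unfolding mg_orbit_def using one_Geen[OF e]
                  by (metis image_eqI)
              qed
              ultimately show False using False by blast
            qed
            then show ?thesis using sum_none[OF rep e] False by simp
          qed
        qed
      qed
    next
      fix a' assume a': "(\<forall>i. i \<notin> ?I \<longrightarrow> a' i = 0) \<and> x = (\<lambda>T. \<Sum>i\<in>?I. a' i * ?b i T)"
      have "a' Orb = a Orb" for Orb
      proof (cases "Orb \<in> ?I")
        case False then show ?thesis using a' unfolding a_def by simp
      next
        case True
        have rO: "rep Orb \<in> Orb" using rep True by blast
        have "x (rep Orb) = a' Orb * ?b Orb (rep Orb)"
          using a' sum_single[OF rep e True rO, of a'] by metis
        then show ?thesis using self[OF True] True unfolding a_def by simp
      qed
      then show "a' = a" by blast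
    qed
  qed
  show ?thesis using P1 P2 P3 by blast
qed

end
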